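(* Let $K$ be a real field, let $R:=\prod_{x\in K}K$ (componentwise operations), regard $K\subseteq R$ via constant functions, and let $E(R)$ be the set of idempotents of $R$. Let $$A:=\Big\{\sum_{i=1}^n e_ix_i: n\in\mathbb N,\ e_i\in E(R),\ x_i\in K\Big\}.$$ Then $A$ is a von Neumann regular Baer ring, $A$ is a proper subring of $R$, and $R$ is the complete ring of quotients of $A$. In particular $A$ is a Baer von Neumann regular ring that is not rationally complete.
   Context: A ring is von Neumann regular if for every $a$ there is $b$ with $a^2b=a$. A commutative ring is Baer if every annihilator ideal is generated by an idempotent. A real field is a field in which $-1$ is not a sum of squares. The complete ring of quotients $Q(A)$ of a commutative ring $A$ is its maximal rational extension; $A$ is rationally complete if $A=Q(A)$. *)

theory Defs
  imports "HOL-Algebra.Ring" "HOL-Algebra.RingHom" "HOL-Algebra.Subrings"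
begin

definition von_neumann_regular :: "('a, 'b) ring_scheme \<Rightarrow> bool" where
  "von_neumann_regular A \<longleftrightarrow> cring A \<and>
     (\<forall>a\<in>carrier A. \<exists>b\<in>carrier A. a \<otimes>\<^bsub>A\<^esub> a \<otimes>\<^bsub>A\<^esub> b = a)"

definition ann :: "('a, 'b) ring_scheme \<Rightarrow> 'a set \<Rightarrow> 'a set" where
  "ann A S = {a \<in> carrier A. \<forall>s\<in>S. a \<otimes>\<^bsub>A\<^esub> s = \<zero>\<^bsub>A\<^esub>}"

definition baer :: "('a, 'b) ring_scheme \<Rightarrow> bool" where
  "baer A \<longleftrightarrow> cring A \<and>
     (\<forall>S \<subseteq> carrier A. \<exists>e\<in>carrier A. e \<otimes>\<^bsub>A\<^esub> e = e \<and>
        ann A S = {e \<otimes>\<^bsub>A\<^esub> a | a. a \<in> carrier A})"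

definition rational_ext ::
    "('a, 'b) ring_scheme \<Rightarrow> ('c, 'd) ring_scheme \<Rightarrow> ('a \<Rightarrow> 'c) \<Rightarrow> bool" where
  "rational_ext A S j \<longleftrightarrow> cring A \<and> cring S \<and> j \<in> ring_hom A S \<and>
     inj_on j (carrier A) \<and>
     (\<forall>s\<in>carrier S. \<forall>t\<in>carrier S. t \<noteq> \<zero>\<^bsub>S\<^esub> \<longrightarrow>
        (\<exists>a\<in>carrier A. j a \<otimes>\<^bsub>S\<^esub> s \<in> j ` carrier A \<and> j a \<otimes>\<^bsub>S\<^esub> t \<noteq> \<zero>\<^bsub>S\<^esub>))"

text \<open>Used with a free type variable 'e in a theorem,
  this expresses maximality with respect to rational extensions of every type.\<close>
definition complete_ring_of_quotients ::
    "('a, 'b) ring_scheme \<Rightarrow> ('c, 'd) ring_scheme \<Rightarrow> ('a \<Rightarrow> 'c) \<Rightarrow> 'e itself \<Rightarrow> bool" where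
  "complete_ring_of_quotients A Q i (T :: 'e itself) \<longleftrightarrow> rational_ext A Q i \<and>
     (\<forall>(S :: 'e ring) j. rational_ext A S j \<longrightarrow>
        (\<exists>h. h \<in> ring_hom S Q \<and> inj_on h (carrier S) \<and> (\<forall>a\<in>carrier A. h (j a) = i a)))"

definition rationally_complete :: "('a, 'b) ring_scheme \<Rightarrow> 'e itself \<Rightarrow> bool" where
  "rationally_complete A (T :: 'e itself) \<longleftrightarrow>
     (\<forall>(S :: 'e ring) j. rational_ext A S j \<longrightarrow> j ` carrier A = carrier S)"

definition real_field :: "'a::field itself \<Rightarrow> bool" where
  "real_field T \<longleftrightarrow> (\<forall>xs :: 'a list. (\<Sum>x\<leftarrow>xs. x ^ 2) \<noteq> - 1)"

definition prodR :: "('a::field \<Rightarrow> 'a) ring" where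
  "prodR = \<lparr>carrier = UNIV, mult = (\<lambda>f g y. f y * g y), one = (\<lambda>y. 1),
            zero = (\<lambda>y. 0), add = (\<lambda>f g y. f y + g y)\<rparr>"

definition idemR :: "('a::field \<Rightarrow> 'a) set" where
  "idemR = {e. \<forall>y. e y * e y = e y}"

definition Aset :: "('a::field \<Rightarrow> 'a) set" where
  "Aset = {(\<lambda>y. \<Sum>i<n. e i y * c i) | (n::nat) e c. \<forall>i<n. e i \<in> idemR}"

definition Aring :: "('a::field \<Rightarrow> 'a) ring" where
  "Aring = prodR\<lparr>carrier := Aset\<rparr>"

end

theory Submission
  imports Defs
begin


lemma prodR_simps[simp]:
  "carrier prodR = UNIV" "mult prodR = (\<lambda>f g y. f y * g y)" "one prodR = (\<lambda>y. 1)"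
  "zero prodR = (\<lambda>y. 0)" "add prodR = (\<lambda>f g y. f y + g y)"
  by (simp_all add: prodR_def)

lemma Aring_simps[simp]:
  "carrier Aring = Aset" "mult Aring = (\<lambda>f g y. f y * g y)" "one Aring = (\<lambda>y. 1)"
  "zero Aring = (\<lambda>y. 0)" "add Aring = (\<lambda>f g y. f y + g y)"
  by (simp_all add: Aring_def prodR_def)

lemma cring_prodR: "cring (prodR :: ('a::field \<Rightarrow> 'a) ring)"
proof (rule cringI)
  show "abelian_group (prodR :: ('a::field \<Rightarrow> 'a) ring)"
    apply (rule abelian_groupI)
    apply (auto simp: fun_eq_iff algebra_simps)
    apply (rule_tac x="\<lambda>y. - x y" in exI) by simp
  show "comm_monoid (prodR :: ('a::field \<Rightarrow> 'a) ring)"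
    by (rule comm_monoidI) (auto simp: fun_eq_iff algebra_simps)
qed (auto simp: fun_eq_iff algebra_simps)

lemma prodR_neg[simp]: "\<ominus>\<^bsub>(prodR :: ('a::field \<Rightarrow> 'a) ring)\<^esub> f = (\<lambda>y. - f y)"
proof -
  interpret cring "prodR :: ('a::field \<Rightarrow> 'a) ring" by (rule cring_prodR)
  show ?thesis by (rule minus_equality) (auto simp: fun_eq_iff)
qed

lemma finite_range_sum:
  fixes n :: nat
  shows "(\<forall>i<n. e i \<in> idemR) \<Longrightarrow> finite (range (\<lambda>y. \<Sum>i<n. e i y * (c i::'a::field)))"
proof (induction n)
  case 0 then show ?case by simp
next
  case (Suc n)
  have e: "\<And>y. e n y = 0 \<or> e n y = 1"
    using Suc.prems by (auto simp: idemR_def)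
  have "range (\<lambda>y. \<Sum>i<Suc n. e i y * c i) \<subseteq>
     (\<lambda>(a,b). a + b) ` (range (\<lambda>y. \<Sum>i<n. e i y * c i) \<times> {0, c n})"
  proof
    fix x assume "x \<in> range (\<lambda>y. \<Sum>i<Suc n. e i y * c i)"
    then obtain y where x: "x = (\<Sum>i<Suc n. e i y * c i)" by auto
    then have "x = (\<lambda>(a,b). a + b) (\<Sum>i<n. e i y * c i, e n y * c n)" by simp
    moreover have "(\<Sum>i<n. e i y * c i, e n y * c n) \<in> range (\<lambda>y. \<Sum>i<n. e i y * c i) \<times> {0, c n}"
      using e[of y] by auto
    ultimately show "x \<in> (\<lambda>(a,b). a + b) ` (range (\<lambda>y. \<Sum>i<n. e i y * c i) \<times> {0, c n})"
      by (rule image_eqI)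
  qed
  moreover have "finite ((\<lambda>(a,b). a + b) ` (range (\<lambda>y. \<Sum>i<n. e i y * c i) \<times> {0, c n}))"
    using Suc by auto
  ultimately show ?case by (rule finite_subset)
qed

lemma Aset_eq: "(Aset :: ('a::field \<Rightarrow> 'a) set) = {f. finite (range f)}"
proof (intro subset_antisym subsetI)
  fix f :: "'a \<Rightarrow> 'a" assume "f \<in> Aset"
  then show "f \<in> {f. finite (range f)}" using finite_range_sum by (auto simp: Aset_def)
next
  fix f :: "'a \<Rightarrow> 'a" assume "f \<in> {f. finite (range f)}"
  then have fin: "finite (range f)" by simp
  obtain g where g: "bij_betw g {..<card (range f)} (range f)"
    using ex_bij_betw_nat_finite[OF fin] atLeast0LessThan by auto
  define e where "e = (\<lambda>i y. if f y = g i then (1::'a) else 0)"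
  have "\<forall>i<card (range f). e i \<in> idemR" by (auto simp: e_def idemR_def)
  moreover have "f = (\<lambda>y. \<Sum>i<card (range f). e i y * g i)"
  proof
    fix y
    have "(\<Sum>i<card (range f). e i y * g i) = (\<Sum>v\<in>range f. (if f y = v then 1 else 0) * v)"
      unfolding e_def using sum.reindex_bij_betw[OF g, of "\<lambda>v. (if f y = v then 1 else 0) * v"]
      by simp
    also have "\<dots> = (\<Sum>v\<in>range f. if f y = v then v else 0)" by (rule sum.cong) auto
    also have "\<dots> = f y" using fin by (simp add: sum.delta)
    finally show "f y = (\<Sum>i<card (range f). e i y * g i)" by simp
  qed
  ultimately show "f \<in> Aset" unfolding Aset_def by blast
qed



lemma finite_range_bin:
  assumes "finite (range f)" "finite (range g)"
  shows "finite (range (\<lambda>y. h (f y) (g y)))"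
proof -
  have "range (\<lambda>y. h (f y) (g y)) \<subseteq> (\<lambda>(a,b). h a b) ` (range f \<times> range g)" by auto
  then show ?thesis using assms finite_subset by blast
qed

lemma subring_Aset: "subring (Aset :: ('a::field \<Rightarrow> 'a) set) prodR"
proof -
  interpret cring "prodR :: ('a::field \<Rightarrow> 'a) ring" by (rule cring_prodR)
  show ?thesis
  proof (rule subringI)
    show "\<one>\<^bsub>prodR\<^esub> \<in> (Aset :: ('a::field \<Rightarrow> 'a) set)" by (simp add: Aset_eq image_def)
    fix h :: "'a \<Rightarrow> 'a" assume "h \<in> Aset"
    then show "\<ominus>\<^bsub>prodR\<^esub> h \<in> Aset" by (simp add: Aset_eq image_image[symmetric, of uminus h])
  next
    fix h1 h2 :: "'a \<Rightarrow> 'a" assume "h1 \<in> Aset" "h2 \<in> Aset"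
    then show "h1 \<otimes>\<^bsub>prodR\<^esub> h2 \<in> Aset" "h1 \<oplus>\<^bsub>prodR\<^esub> h2 \<in> Aset"
      by (simp_all add: Aset_eq finite_range_bin)
  qed simp
qed

lemma cring_Aring: "cring (Aring :: ('a::field \<Rightarrow> 'a) ring)"
proof -
  interpret cring "prodR :: ('a::field \<Rightarrow> 'a) ring" by (rule cring_prodR)
  have "subcring (Aset :: ('a::field \<Rightarrow> 'a) set) prodR" by (rule subcringI'[OF subring_Aset])
  then show ?thesis unfolding Aring_def by (subst subcring_iff[symmetric]) auto
qed

lemma vnr: "von_neumann_regular (Aring :: ('a::field \<Rightarrow> 'a) ring)"
  unfolding von_neumann_regular_def
proof (intro conjI cring_Aring ballI)
  fix a :: "'a \<Rightarrow> 'a" assume a: "a \<in> carrier Aring"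
  define b where "b = (\<lambda>y. inverse (a y))"
  have "b \<in> Aset" using a by (simp add: Aset_eq b_def image_image[symmetric, of inverse a])
  moreover have "a \<otimes>\<^bsub>Aring\<^esub> a \<otimes>\<^bsub>Aring\<^esub> b = a" by (auto simp: b_def fun_eq_iff field_simps)
  ultimately show "\<exists>b\<in>carrier Aring. a \<otimes>\<^bsub>Aring\<^esub> a \<otimes>\<^bsub>Aring\<^esub> b = a" by auto
qed

lemma baer: "baer (Aring :: ('a::field \<Rightarrow> 'a) ring)"
  unfolding baer_def
proof (intro conjI cring_Aring allI impI)
  fix S :: "('a \<Rightarrow> 'a) set" assume S: "S \<subseteq> carrier Aring"
  define e :: "'a \<Rightarrow> 'a" where "e = (\<lambda>y. if \<forall>s\<in>S. s y = 0 then 1 else 0)"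
  have eA: "e \<in> Aset"
  proof -
    have "range e \<subseteq> {0,1}" by (auto simp: e_def)
    then show ?thesis by (simp add: Aset_eq finite_subset)
  qed
  have "ann Aring S = {e \<otimes>\<^bsub>Aring\<^esub> a | a. a \<in> carrier Aring}"
  proof (intro subset_antisym subsetI)
    fix a assume "a \<in> ann Aring S"
    then have a: "a \<in> Aset" "\<forall>s\<in>S. (\<lambda>y. a y * s y) = (\<lambda>y. 0)" by (auto simp: ann_def)
    have "a = e \<otimes>\<^bsub>Aring\<^esub> a"
    proof -
      have "a y = e y * a y" for y
      proof (cases "\<forall>s\<in>S. s y = 0")
        case False
        then obtain s where "s \<in> S" "s y \<noteq> 0" by auto
        then have "a y * s y = 0" using a(2) by (metis (mono_tags))
        then show ?thesis using \<open>s y \<noteq> 0\<close> by (simp add: e_def)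
      qed (simp add: e_def)
      then show ?thesis by (simp add: fun_eq_iff)
    qed
    then show "a \<in> {e \<otimes>\<^bsub>Aring\<^esub> a | a. a \<in> carrier Aring}" using a by auto
  next
    fix x assume "x \<in> {e \<otimes>\<^bsub>Aring\<^esub> a | a. a \<in> carrier Aring}"
    then obtain a where a: "a \<in> Aset" "x = (\<lambda>y. e y * a y)" by auto
    have "x \<in> Aset" using a eA by (simp add: Aset_eq finite_range_bin)
    moreover have "\<forall>s\<in>S. (\<lambda>y. x y * s y) = (\<lambda>y. 0)"
      by (auto simp: a e_def fun_eq_iff)
    ultimately show "x \<in> ann Aring S" by (simp add: ann_def)
  qed
  moreover have "e \<otimes>\<^bsub>Aring\<^esub> e = e" by (auto simp: e_def fun_eq_iff)
  ultimately show "\<exists>e\<in>carrier Aring. e \<otimes>\<^bsub>Aring\<^esub> e = e \<and> ann Aring S = {e \<otimes>\<^bsub>Aring\<^esub> a | a. a \<in> carrier Aring}"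
    using eA by auto
qed

lemma real_field_infinite:
  assumes "real_field TYPE('a::field)"
  shows "infinite (UNIV :: 'a set)"
proof -
  have "inj (of_nat :: nat \<Rightarrow> 'a)"
  proof (rule injI, rule ccontr)
    fix m n :: nat assume eq: "(of_nat m :: 'a) = of_nat n" and ne: "m \<noteq> n"
    have "\<exists>k. (of_nat (Suc k) :: 'a) = 0"
    proof (cases "m < n")
      case True
      then have "(of_nat (n - m) :: 'a) = 0" using eq by (simp add: of_nat_diff)
      then show ?thesis using True by (metis Suc_diff_Suc)
    next
      case False
      then have "n < m" using ne by simp
      then have "(of_nat (m - n) :: 'a) = 0" using eq by (simp add: of_nat_diff)
      then show ?thesis using \<open>n < m\<close> by (metis Suc_diff_Suc)
    qed
    then obtain k where k: "(of_nat (Suc k) :: 'a) = 0" by auto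
    have "(\<Sum>x\<leftarrow>replicate k (1::'a). x ^ 2) = of_nat k" by (simp add: sum_list_replicate)
    also have "\<dots> = -1" using k by (simp add: eq_neg_iff_add_eq_0 add.commute)
    finally show False using assms unfolding real_field_def by blast
  qed
  then show ?thesis using finite_imageD infinite_UNIV_nat by (metis finite_subset subset_UNIV)
qed



definition delta :: "'a::field \<Rightarrow> 'a \<Rightarrow> 'a" where
  "delta y0 = (\<lambda>y. if y = y0 then 1 else 0)"

lemma delta_A: "delta y0 \<in> Aset"
proof -
  have "range (delta y0) \<subseteq> {0,1}" by (auto simp: delta_def)
  then show ?thesis by (simp add: Aset_eq finite_subset)
qed

lemma point_A: "(\<lambda>y. if y = y0 then c else (0::'a::field)) \<in> Aset"
proof -
  have "range (\<lambda>y. if y = y0 then c else (0::'a::field)) \<subseteq> {0,c}" by auto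
  then show ?thesis by (simp add: Aset_eq finite_subset)
qed

lemma rational_prodR: "rational_ext (Aring :: ('a::field \<Rightarrow> 'a) ring) prodR id"
  unfolding rational_ext_def
proof (intro conjI cring_Aring cring_prodR ballI impI)
  show "id \<in> ring_hom (Aring :: ('a::field \<Rightarrow> 'a) ring) prodR"
    by (rule ring_hom_memI) auto
  show "inj_on id (carrier (Aring :: ('a::field \<Rightarrow> 'a) ring))" by simp
  fix s t :: "'a \<Rightarrow> 'a" assume "t \<noteq> \<zero>\<^bsub>prodR\<^esub>"
  then obtain y0 where y0: "t y0 \<noteq> 0" by (auto simp: fun_eq_iff)
  have "delta y0 \<otimes>\<^bsub>prodR\<^esub> s = (\<lambda>y. if y = y0 then s y0 else 0)"
    by (auto simp: delta_def fun_eq_iff)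
  then have "id (delta y0) \<otimes>\<^bsub>prodR\<^esub> s \<in> id ` carrier Aring" using point_A by simp
  moreover have "id (delta y0) \<otimes>\<^bsub>prodR\<^esub> t \<noteq> \<zero>\<^bsub>prodR\<^esub>"
    using y0 by (auto simp: delta_def fun_eq_iff)
  ultimately show "\<exists>a\<in>carrier Aring. id a \<otimes>\<^bsub>prodR\<^esub> s \<in> id ` carrier Aring \<and> id a \<otimes>\<^bsub>prodR\<^esub> t \<noteq> \<zero>\<^bsub>prodR\<^esub>"
    using delta_A by auto
qed

lemma maximal:
  fixes S :: "'e ring" and j :: "('a::field \<Rightarrow> 'a) \<Rightarrow> 'e"
  assumes rat: "rational_ext (Aring :: ('a \<Rightarrow> 'a) ring) S j"
  shows "\<exists>h. h \<in> ring_hom S prodR \<and> inj_on h (carrier S) \<and> (\<forall>a\<in>carrier Aring. h (j a) = id a)"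
proof -
  interpret S: cring S using rat by (simp add: rational_ext_def)
  interpret A: cring "Aring :: ('a \<Rightarrow> 'a) ring" by (rule cring_Aring)
  have hom: "j \<in> ring_hom (Aring :: ('a \<Rightarrow> 'a) ring) S" and inj: "inj_on j Aset"
    and dense: "\<And>s t. s \<in> carrier S \<Longrightarrow> t \<in> carrier S \<Longrightarrow> t \<noteq> \<zero>\<^bsub>S\<^esub> \<Longrightarrow>
        \<exists>a\<in>Aset. j a \<otimes>\<^bsub>S\<^esub> s \<in> j ` Aset \<and> j a \<otimes>\<^bsub>S\<^esub> t \<noteq> \<zero>\<^bsub>S\<^esub>"
    using rat by (auto simp: rational_ext_def)
  have jm: "j (\<lambda>y. a y * b y) = j a \<otimes>\<^bsub>S\<^esub> j b" if "a \<in> Aset" "b \<in> Aset" for a b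
    using ring_hom_mult[OF hom, of a b] that by simp
  have ja: "j (\<lambda>y. a y + b y) = j a \<oplus>\<^bsub>S\<^esub> j b" if "a \<in> Aset" "b \<in> Aset" for a b
    using ring_hom_add[OF hom, of a b] that by simp
  have j1: "j (\<lambda>y. 1) = \<one>\<^bsub>S\<^esub>" using ring_hom_one[OF hom] by simp
  have j0: "j (\<lambda>y. 0) = \<zero>\<^bsub>S\<^esub>"
    using ring_hom_zero[OF hom A.ring_axioms S.ring_axioms] by simp
  have jc: "j a \<in> carrier S" if "a \<in> Aset" for a using ring_hom_closed[OF hom] that by simp
  have mA: "(\<lambda>y. a y * b y) \<in> Aset" if "a \<in> Aset" "b \<in> Aset" for a b :: "'a \<Rightarrow> 'a"
    using that by (simp add: Aset_eq finite_range_bin)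
  have aA: "(\<lambda>y. a y + b y) \<in> Aset" if "a \<in> Aset" "b \<in> Aset" for a b :: "'a \<Rightarrow> 'a"
    using that by (simp add: Aset_eq finite_range_bin)
  have jinj: "a = b" if "a \<in> Aset" "b \<in> Aset" "j a = j b" for a b
    using inj that by (meson inj_onD)
  have key: "\<exists>b\<in>Aset. j (delta y0) \<otimes>\<^bsub>S\<^esub> s = j b" if s: "s \<in> carrier S" for s y0
  proof -
    have "j (delta y0) \<noteq> \<zero>\<^bsub>S\<^esub>"
    proof
      assume "j (delta y0) = \<zero>\<^bsub>S\<^esub>"
      then have "delta y0 = (\<lambda>y. 0)" using jinj[OF delta_A, of "\<lambda>y. 0"] j0 point_A[of _ 0] by simp
      then have "delta y0 y0 = 0" by simp
      then show False by (simp add: delta_def)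
    qed
    then obtain a where a: "a \<in> Aset" "j a \<otimes>\<^bsub>S\<^esub> s \<in> j ` Aset" "j a \<otimes>\<^bsub>S\<^esub> j (delta y0) \<noteq> \<zero>\<^bsub>S\<^esub>"
      using dense[OF s jc[OF delta_A]] \<open>j (delta y0) \<noteq> \<zero>\<^bsub>S\<^esub>\<close> by blast
    obtain c where c: "c \<in> Aset" "j a \<otimes>\<^bsub>S\<^esub> s = j c" using a(2) by auto
    have "a y0 \<noteq> 0"
    proof
      assume "a y0 = 0"
      then have "(\<lambda>y. a y * delta y0 y) = (\<lambda>y. 0)" by (auto simp: delta_def fun_eq_iff)
      then show False using a(3) jm[OF a(1) delta_A, of y0] j0 by simp
    qed
    define d where "d = (\<lambda>y. if y = y0 then inverse (a y0) else 0)"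
    have dA: "d \<in> Aset" unfolding d_def by (rule point_A)
    have "delta y0 = (\<lambda>y. d y * a y)" using \<open>a y0 \<noteq> 0\<close> by (auto simp: d_def delta_def fun_eq_iff)
    then have "j (delta y0) \<otimes>\<^bsub>S\<^esub> s = (j d \<otimes>\<^bsub>S\<^esub> j a) \<otimes>\<^bsub>S\<^esub> s" using jm[OF dA a(1)] by simp
    also have "\<dots> = j d \<otimes>\<^bsub>S\<^esub> j c" using c S.m_assoc jc dA a(1) s by simp
    also have "\<dots> = j (\<lambda>y. d y * c y)" using jm[OF dA c(1)] by simp
    finally show ?thesis using mA[OF dA c(1)] by blast
  qed
  define B where "B = (\<lambda>s y0. SOME b. b \<in> Aset \<and> j (delta y0) \<otimes>\<^bsub>S\<^esub> s = j b)"
  have B: "B s y0 \<in> Aset \<and> j (delta y0) \<otimes>\<^bsub>S\<^esub> s = j (B s y0)" if "s \<in> carrier S" for s y0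
    unfolding B_def using someI_ex[OF key[OF that, of y0, unfolded Bex_def]] by blast
  have Bu: "B s y0 = b" if "s \<in> carrier S" "b \<in> Aset" "j (delta y0) \<otimes>\<^bsub>S\<^esub> s = j b" for s y0 b
    using B[OF that(1), of y0] that jinj[of "B s y0" b] by simp
  define h where "h = (\<lambda>s y0. B s y0 y0)"
  have dd: "j (delta y0) \<otimes>\<^bsub>S\<^esub> j (delta y0) = j (delta y0)" for y0 :: 'a
  proof -
    have "(\<lambda>y. delta y0 y * delta y0 y) = delta y0" by (auto simp: delta_def)
    then show ?thesis using jm[OF delta_A delta_A, of y0 y0] by (simp only:)
  qed
  have hmult: "h (x \<otimes>\<^bsub>S\<^esub> y) = (\<lambda>z. h x z * h y z)" if xy: "x \<in> carrier S" "y \<in> carrier S" for x y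
  proof
    fix y0
    have BxA: "B x y0 \<in> Aset" and Bx: "j (delta y0) \<otimes>\<^bsub>S\<^esub> x = j (B x y0)" using B[OF xy(1)] by auto
    have ByA: "B y y0 \<in> Aset" and By: "j (delta y0) \<otimes>\<^bsub>S\<^esub> y = j (B y y0)" using B[OF xy(2)] by auto
    have djc: "j (delta y0) \<in> carrier S" using jc[OF delta_A] .
    have "j (delta y0) \<otimes>\<^bsub>S\<^esub> (x \<otimes>\<^bsub>S\<^esub> y) = (j (delta y0) \<otimes>\<^bsub>S\<^esub> j (delta y0)) \<otimes>\<^bsub>S\<^esub> (x \<otimes>\<^bsub>S\<^esub> y)"
      using dd by simp
    also have "\<dots> = (j (delta y0) \<otimes>\<^bsub>S\<^esub> x) \<otimes>\<^bsub>S\<^esub> (j (delta y0) \<otimes>\<^bsub>S\<^esub> y)"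
      using djc xy by (simp add: S.m_ac)
    also have "\<dots> = j (\<lambda>z. B x y0 z * B y y0 z)" using Bx By jm[OF BxA ByA] by simp
    finally have "B (x \<otimes>\<^bsub>S\<^esub> y) y0 = (\<lambda>z. B x y0 z * B y y0 z)"
      using Bu[OF S.m_closed[OF xy] mA[OF BxA ByA]] by simp
    then show "h (x \<otimes>\<^bsub>S\<^esub> y) y0 = h x y0 * h y y0" by (simp add: h_def)
  qed
  have hadd: "h (x \<oplus>\<^bsub>S\<^esub> y) = (\<lambda>z. h x z + h y z)" if xy: "x \<in> carrier S" "y \<in> carrier S" for x y
  proof
    fix y0
    have BxA: "B x y0 \<in> Aset" and Bx: "j (delta y0) \<otimes>\<^bsub>S\<^esub> x = j (B x y0)" using B[OF xy(1)] by auto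
    have ByA: "B y y0 \<in> Aset" and By: "j (delta y0) \<otimes>\<^bsub>S\<^esub> y = j (B y y0)" using B[OF xy(2)] by auto
    have djc: "j (delta y0) \<in> carrier S" using jc[OF delta_A] .
    have "j (delta y0) \<otimes>\<^bsub>S\<^esub> (x \<oplus>\<^bsub>S\<^esub> y) = (j (delta y0) \<otimes>\<^bsub>S\<^esub> x) \<oplus>\<^bsub>S\<^esub> (j (delta y0) \<otimes>\<^bsub>S\<^esub> y)"
      using djc xy by (simp add: S.r_distr)
    also have "\<dots> = j (\<lambda>z. B x y0 z + B y y0 z)" using Bx By ja[OF BxA ByA] by simp
    finally have "B (x \<oplus>\<^bsub>S\<^esub> y) y0 = (\<lambda>z. B x y0 z + B y y0 z)"
      using Bu[OF S.a_closed[OF xy] aA[OF BxA ByA]] by simp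
    then show "h (x \<oplus>\<^bsub>S\<^esub> y) y0 = h x y0 + h y y0" by (simp add: h_def)
  qed
  have hj: "h (j a) = a" if a: "a \<in> Aset" for a
  proof
    fix y0
    have "j (delta y0) \<otimes>\<^bsub>S\<^esub> j a = j (\<lambda>z. delta y0 z * a z)" using jm[OF delta_A a] by simp
    then have "B (j a) y0 = (\<lambda>z. delta y0 z * a z)" using Bu[OF jc[OF a] mA[OF delta_A a]] by simp
    then show "h (j a) y0 = a y0" by (simp add: h_def delta_def)
  qed
  have hom_h: "h \<in> ring_hom S prodR"
  proof (rule ring_hom_memI)
    have "(\<lambda>y. 1) \<in> (Aset :: ('a \<Rightarrow> 'a) set)" using A.one_closed by simp
    then show "h \<one>\<^bsub>S\<^esub> = \<one>\<^bsub>prodR\<^esub>" using hj[OF \<open>(\<lambda>y. 1) \<in> Aset\<close>] j1 by simp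
  qed (simp_all add: hmult hadd)
  have hinj: "inj_on h (carrier S)"
  proof (rule inj_onI, rule ccontr)
    fix x y assume xy: "x \<in> carrier S" "y \<in> carrier S" "h x = h y" "x \<noteq> y"
    define u where "u = x \<ominus>\<^bsub>S\<^esub> y"
    have uc: "u \<in> carrier S" using xy by (simp add: u_def)
    have "x = u \<oplus>\<^bsub>S\<^esub> y" using xy by (simp add: u_def S.minus_eq S.a_assoc S.l_neg)
    then have "h x = (\<lambda>z. h u z + h y z)" using hadd[OF uc xy(2)] by simp
    then have "h x z = h u z + h y z" for z by simp
    then have hu: "h u z = 0" for z using xy(3) by simp
    have "u \<noteq> \<zero>\<^bsub>S\<^esub>" using \<open>x = u \<oplus>\<^bsub>S\<^esub> y\<close> xy by auto
    then obtain a where a: "a \<in> Aset" "j a \<otimes>\<^bsub>S\<^esub> u \<in> j ` Aset" "j a \<otimes>\<^bsub>S\<^esub> u \<noteq> \<zero>\<^bsub>S\<^esub>"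
      using dense[OF uc uc \<open>u \<noteq> \<zero>\<^bsub>S\<^esub>\<close>] by blast
    obtain c where c: "c \<in> Aset" "j a \<otimes>\<^bsub>S\<^esub> u = j c" using a(2) by auto
    have "c \<noteq> (\<lambda>y. 0)" using a(3) c j0 by auto
    then obtain y0 where y0: "c y0 \<noteq> 0" by (auto simp: fun_eq_iff)
    have BuA: "B u y0 \<in> Aset" and Bu': "j (delta y0) \<otimes>\<^bsub>S\<^esub> u = j (B u y0)" using B[OF uc] by auto
    have djc: "j (delta y0) \<in> carrier S" using jc[OF delta_A] .
    have "j (\<lambda>z. delta y0 z * c z) = j (delta y0) \<otimes>\<^bsub>S\<^esub> (j a \<otimes>\<^bsub>S\<^esub> u)" using jm[OF delta_A c(1)] c by simp
    also have "\<dots> = j a \<otimes>\<^bsub>S\<^esub> (j (delta y0) \<otimes>\<^bsub>S\<^esub> u)" using S.m_lcomm[OF djc jc[OF a(1)] uc] by simp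
    also have "\<dots> = j (\<lambda>z. a z * B u y0 z)" using Bu' jm[OF a(1) BuA] by simp
    finally have eqf: "(\<lambda>z. delta y0 z * c z) = (\<lambda>z. a z * B u y0 z)"
      using jinj[OF mA[OF delta_A c(1)] mA[OF a(1) BuA]] by simp
    have "delta y0 y0 * c y0 = a y0 * B u y0 y0" using fun_cong[OF eqf, of y0] by simp
    then have "c y0 = a y0 * B u y0 y0" by (simp add: delta_def)
    then show False using hu[of y0] y0 by (simp add: h_def)
  qed
  show ?thesis using hom_h hinj hj by auto
qed


theorem mainTheorem10:
  assumes "real_field TYPE('a::field)"
  shows "von_neumann_regular (Aring :: ('a \<Rightarrow> 'a) ring)
       \<and> baer (Aring :: ('a \<Rightarrow> 'a) ring)
       \<and> subring (Aset :: ('a \<Rightarrow> 'a) set) prodR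
       \<and> (Aset :: ('a \<Rightarrow> 'a) set) \<noteq> carrier prodR
       \<and> complete_ring_of_quotients (Aring :: ('a \<Rightarrow> 'a) ring) (prodR :: ('a \<Rightarrow> 'a) ring) id TYPE('e)
       \<and> \<not> rationally_complete (Aring :: ('a \<Rightarrow> 'a) ring) TYPE('a \<Rightarrow> 'a)"
proof -
  have ne: "(Aset :: ('a \<Rightarrow> 'a) set) \<noteq> carrier prodR"
  proof
    assume "(Aset :: ('a \<Rightarrow> 'a) set) = carrier prodR"
    then have "(\<lambda>x::'a. x) \<in> Aset" by simp
    then have "finite (UNIV :: 'a set)" by (simp add: Aset_eq)
    then show False using real_field_infinite[OF assms] by simp
  qed
  have crq: "complete_ring_of_quotients (Aring :: ('a \<Rightarrow> 'a) ring) (prodR :: ('a \<Rightarrow> 'a) ring) id TYPE('e)"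
    unfolding complete_ring_of_quotients_def using rational_prodR maximal by blast
  have nrc: "\<not> rationally_complete (Aring :: ('a \<Rightarrow> 'a) ring) TYPE('a \<Rightarrow> 'a)"
    unfolding rationally_complete_def using rational_prodR ne by fastforce
  show ?thesis using vnr baer subring_Aset ne crq nrc by blast
qed

end
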